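(* Identify $\mathbb{S}_n$ with its image in $\mathrm{End}_K(P_n)$ under the action described in the context. Then $$G_n=\{\sigma_\varphi\mid \varphi\in\mathrm{Aut}_K(P_n)\ \text{such that}\ \varphi\mathbb{S}_n\varphi^{-1}=\mathbb{S}_n\},\qquad \sigma_\varphi(a):=\varphi a\varphi^{-1}\ (a\in\mathbb{S}_n).$$
   Context: $K$ is a field of characteristic zero. $\mathbb{S}_n$ is the $K$-algebra generated by $x_1,\dots,x_n,y_1,\dots,y_n$ with defining relations $y_ix_i=1$ ($1\le i\le n$) and $[x_i,y_j]=[x_i,x_j]=[y_i,y_j]=0$ for $i\ne j$; $G_n=\mathrm{Aut}_{K\text{-alg}}(\mathbb{S}_n)$. $P_n=K[x_1,\dots,x_n]$ is a faithful $\mathbb{S}_n$-module via $x_i*x^\alpha=x^{\alpha+e_i}$ and $y_i*x^\alpha=x^{\alpha-e_i}$ if $\alpha_i>0$, $y_i*x^\alpha=0$ if $\alpha_i=0$ (here $x^\alpha=x_1^{\alpha_1}\cdots x_n^{\alpha_n}$, $e_i$ the standard basis vectors of $\mathbb{Z}^n$). $\mathrm{Aut}_K(P_n)$ is the group of invertible $K$-linear maps $P_n\to P_n$. *)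

theory Defs
  imports "HOL-Library.FuncSet"
begin

text \<open>The index set of variables is a finite type 'n with CARD('n) = n.
  An element of P_n is its coefficient function on exponent vectors
  (of type 'n \<Rightarrow> nat) with finite support.\<close>

type_synonym ('n, 'k) poly_n = "('n \<Rightarrow> nat) \<Rightarrow> 'k"
type_synonym ('n, 'k) op_n = "('n, 'k) poly_n \<Rightarrow> ('n, 'k) poly_n"

definition Pn :: "('n::finite, 'k::field_char_0) poly_n set" where
  "Pn = {p. finite {a. p a \<noteq> 0}}"

definition padd :: "('n, 'k::field_char_0) poly_n \<Rightarrow> ('n, 'k) poly_n \<Rightarrow> ('n, 'k) poly_n" where
  "padd p q = (\<lambda>a. p a + q a)"

definition psmult :: "'k::field_char_0 \<Rightarrow> ('n, 'k) poly_n \<Rightarrow> ('n, 'k) poly_n" where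
  "psmult c p = (\<lambda>a. c * p a)"

definition Xop :: "'n::finite \<Rightarrow> ('n, 'k::field_char_0) op_n" where
  "Xop i = restrict (\<lambda>p a. if 0 < a i then p (a(i := a i - 1)) else 0) Pn"

definition Yop :: "'n::finite \<Rightarrow> ('n, 'k::field_char_0) op_n" where
  "Yop i = restrict (\<lambda>p a. p (a(i := a i + 1))) Pn"

definition ocomp :: "('n::finite, 'k::field_char_0) op_n \<Rightarrow> ('n, 'k) op_n \<Rightarrow> ('n, 'k) op_n" where
  "ocomp f g = restrict (f \<circ> g) Pn"

definition oadd :: "('n::finite, 'k::field_char_0) op_n \<Rightarrow> ('n, 'k) op_n \<Rightarrow> ('n, 'k) op_n" where
  "oadd f g = restrict (\<lambda>p. padd (f p) (g p)) Pn"

definition osmult :: "'k::field_char_0 \<Rightarrow> ('n::finite, 'k) op_n \<Rightarrow> ('n, 'k) op_n" where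
  "osmult c f = restrict (\<lambda>p. psmult c (f p)) Pn"

definition oone :: "('n::finite, 'k::field_char_0) op_n" where
  "oone = restrict id Pn"

definition lin_on_Pn :: "('n::finite, 'k::field_char_0) op_n \<Rightarrow> bool" where
  "lin_on_Pn f \<longleftrightarrow> (\<forall>p\<in>Pn. \<forall>q\<in>Pn. f (padd p q) = padd (f p) (f q))
                   \<and> (\<forall>c. \<forall>p\<in>Pn. f (psmult c p) = psmult c (f p))"

definition AutK :: "('n::finite, 'k::field_char_0) op_n set" where
  "AutK = {\<phi>. \<phi> \<in> Pn \<rightarrow>\<^sub>E Pn \<and> lin_on_Pn \<phi> \<and> bij_betw \<phi> Pn Pn}"

definition oinv :: "('n::finite, 'k::field_char_0) op_n \<Rightarrow> ('n, 'k) op_n" where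
  "oinv \<phi> = restrict (inv_into Pn \<phi>) Pn"

inductive_set Sn :: "('n::finite, 'k::field_char_0) op_n set" where
  gen_x: "Xop i \<in> Sn"
| gen_y: "Yop i \<in> Sn"
| one: "oone \<in> Sn"
| add: "f \<in> Sn \<Longrightarrow> g \<in> Sn \<Longrightarrow> oadd f g \<in> Sn"
| smult: "f \<in> Sn \<Longrightarrow> osmult c f \<in> Sn"
| comp: "f \<in> Sn \<Longrightarrow> g \<in> Sn \<Longrightarrow> ocomp f g \<in> Sn"

definition Gn :: "(('n::finite, 'k::field_char_0) op_n \<Rightarrow> ('n, 'k) op_n) set" where
  "Gn = {\<sigma>. \<sigma> \<in> Sn \<rightarrow>\<^sub>E Sn \<and> bij_betw \<sigma> Sn Sn
          \<and> (\<forall>a\<in>Sn. \<forall>b\<in>Sn. \<sigma> (oadd a b) = oadd (\<sigma> a) (\<sigma> b)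
                           \<and> \<sigma> (ocomp a b) = ocomp (\<sigma> a) (\<sigma> b))
          \<and> (\<forall>c. \<forall>a\<in>Sn. \<sigma> (osmult c a) = osmult c (\<sigma> a))
          \<and> \<sigma> oone = oone}"

definition conj_op :: "('n::finite, 'k::field_char_0) op_n \<Rightarrow> ('n, 'k) op_n \<Rightarrow> ('n, 'k) op_n" where
  "conj_op \<phi> a = ocomp \<phi> (ocomp a (oinv \<phi>))"

definition sigma_op :: "('n::finite, 'k::field_char_0) op_n \<Rightarrow> ('n, 'k) op_n \<Rightarrow> ('n, 'k) op_n" where
  "sigma_op \<phi> = restrict (conj_op \<phi>) Sn"

end

theory Submission
  imports Defs
begin


definition delta :: "('n \<Rightarrow> nat) \<Rightarrow> ('n,'k::field_char_0) poly_n" where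
  "delta g = (\<lambda>a. if a = g then 1 else 0)"

lemma padd_Pn: "p \<in> Pn \<Longrightarrow> q \<in> Pn \<Longrightarrow> padd p q \<in> Pn"
proof -
  assume a: "p \<in> Pn" "q \<in> Pn"
  have "{a. p a + q a \<noteq> 0} \<subseteq> {a. p a \<noteq> 0} \<union> {a. q a \<noteq> 0}" by auto
  then show ?thesis using a unfolding Pn_def padd_def by (auto intro: finite_subset)
qed

lemma psmult_Pn: "p \<in> Pn \<Longrightarrow> psmult c p \<in> Pn"
proof -
  assume a: "p \<in> Pn"
  have "{a. c * p a \<noteq> 0} \<subseteq> {a. p a \<noteq> 0}" by auto
  then show ?thesis using a unfolding Pn_def psmult_def by (auto intro: finite_subset)
qed

lemma delta_Pn: "delta g \<in> Pn"
proof -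
  have "{a. delta g a \<noteq> (0::'k::field_char_0)} \<subseteq> {g}" by (auto simp: delta_def)
  then show ?thesis unfolding Pn_def by (auto intro: finite_subset)
qed

lemma zero_Pn: "(\<lambda>_. 0) \<in> Pn" by (simp add: Pn_def)

lemma Xop_apply: "p \<in> Pn \<Longrightarrow> Xop i p = (\<lambda>a. if 0 < a i then p (a(i := a i - 1)) else 0)"
  by (simp add: Xop_def)
lemma Yop_apply: "p \<in> Pn \<Longrightarrow> Yop i p = (\<lambda>a. p (a(i := a i + 1)))"
  by (simp add: Yop_def)
lemma ocomp_apply: "p \<in> Pn \<Longrightarrow> ocomp f g p = f (g p)" by (simp add: ocomp_def)
lemma oadd_apply: "p \<in> Pn \<Longrightarrow> oadd f g p = padd (f p) (g p)" by (simp add: oadd_def)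
lemma osmult_apply: "p \<in> Pn \<Longrightarrow> osmult c f p = psmult c (f p)" by (simp add: osmult_def)
lemma oone_apply: "p \<in> Pn \<Longrightarrow> oone p = p" by (simp add: oone_def)

lemma ext_ops: "oone \<in> extensional Pn" "oadd f g \<in> extensional Pn"
  "osmult c f \<in> extensional Pn" "ocomp f g \<in> extensional Pn"
  unfolding oone_def oadd_def osmult_def ocomp_def by (rule restrict_extensional)+

lemma Xop_Pn: assumes "p \<in> Pn" shows "Xop i p \<in> Pn"
proof -
  have "{a. Xop i p a \<noteq> 0} \<subseteq> (\<lambda>a. a(i := Suc (a i))) ` {a. p a \<noteq> 0}"
  proof
    fix a assume "a \<in> {a. Xop i p a \<noteq> 0}"
    then have h: "0 < a i" "p (a(i := a i - 1)) \<noteq> 0" using assms by (auto simp: Xop_apply split: if_splits)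
    have "a = (\<lambda>a. a(i := Suc (a i))) (a(i := a i - 1))" using h(1) by (auto simp: fun_eq_iff)
    then show "a \<in> (\<lambda>a. a(i := Suc (a i))) ` {a. p a \<noteq> 0}" using h(2) by blast
  qed
  then show ?thesis using assms unfolding Pn_def by (auto intro: finite_subset)
qed

lemma Yop_Pn: assumes "p \<in> Pn" shows "Yop i p \<in> Pn"
proof -
  have "{a. Yop i p a \<noteq> 0} \<subseteq> (\<lambda>a. a(i := a i - 1)) ` {a. p a \<noteq> 0}"
  proof
    fix a assume "a \<in> {a. Yop i p a \<noteq> 0}"
    then have h: "p (a(i := a i + 1)) \<noteq> 0" using assms by (auto simp: Yop_apply)
    have "a = (\<lambda>a. a(i := a i - 1)) (a(i := a i + 1))" by (auto simp: fun_eq_iff)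
    then show "a \<in> (\<lambda>a. a(i := a i - 1)) ` {a. p a \<noteq> 0}" using h by blast
  qed
  then show ?thesis using assms unfolding Pn_def by (auto intro: finite_subset)
qed

lemma Sn_props: "f \<in> Sn \<Longrightarrow> f \<in> extensional Pn \<and> (\<forall>p\<in>Pn. f p \<in> Pn) \<and> lin_on_Pn f"
proof (induction rule: Sn.induct)
  case (gen_x i)
  have "lin_on_Pn (Xop i)" unfolding lin_on_Pn_def
    by (simp add: Xop_apply padd_Pn psmult_Pn) (simp add: padd_def psmult_def fun_eq_iff)
  moreover have "Xop i \<in> extensional Pn" unfolding Xop_def by (rule restrict_extensional)
  ultimately show ?case using Xop_Pn by blast
next
  case (gen_y i)
  have "lin_on_Pn (Yop i)" unfolding lin_on_Pn_def
    by (simp add: Yop_apply padd_Pn psmult_Pn) (simp add: padd_def psmult_def fun_eq_iff)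
  moreover have "Yop i \<in> extensional Pn" unfolding Yop_def by (rule restrict_extensional)
  ultimately show ?case using Yop_Pn by blast
next
  case one
  then show ?case by (simp add: ext_ops oone_apply lin_on_Pn_def padd_Pn psmult_Pn)
next
  case (add f g)
  then show ?case by (simp add: ext_ops oadd_apply lin_on_Pn_def padd_Pn psmult_Pn) (simp add: padd_def psmult_def fun_eq_iff algebra_simps)
next
  case (smult f c)
  then show ?case by (simp add: ext_ops osmult_apply lin_on_Pn_def padd_Pn psmult_Pn) (simp add: padd_def psmult_def fun_eq_iff algebra_simps)
next
  case (comp f g)
  then show ?case by (simp add: ext_ops ocomp_apply lin_on_Pn_def padd_Pn psmult_Pn)
qed

lemma Sn_ext: "f \<in> Sn \<Longrightarrow> f \<in> extensional Pn" using Sn_props by blast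
lemma Sn_Pn: "f \<in> Sn \<Longrightarrow> p \<in> Pn \<Longrightarrow> f p \<in> Pn" using Sn_props by blast
lemma Sn_add: "f \<in> Sn \<Longrightarrow> p \<in> Pn \<Longrightarrow> q \<in> Pn \<Longrightarrow> f (padd p q) = padd (f p) (f q)"
  using Sn_props unfolding lin_on_Pn_def by blast
lemma Sn_smult: "f \<in> Sn \<Longrightarrow> p \<in> Pn \<Longrightarrow> f (psmult c p) = psmult c (f p)"
  using Sn_props unfolding lin_on_Pn_def by blast



lemma sum_dec:
  fixes \<beta> :: "'n::finite \<Rightarrow> nat"
  assumes "0 < \<beta> i"
  shows "sum (\<beta>(i := \<beta> i - 1)) UNIV < sum \<beta> UNIV"
proof -
  have a: "sum \<beta> UNIV = \<beta> i + sum \<beta> (UNIV - {i})" using sum.remove[of UNIV i \<beta>] by simp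
  have b: "sum (\<beta>(i := \<beta> i - 1)) UNIV = (\<beta> i - 1) + sum (\<beta>(i := \<beta> i - 1)) (UNIV - {i})"
    using sum.remove[of UNIV i "\<beta>(i := \<beta> i - 1)"] by simp
  have c: "sum (\<beta>(i := \<beta> i - 1)) (UNIV - {i}) = sum \<beta> (UNIV - {i})"
    by (rule sum.cong) auto
  show ?thesis using a b c assms by simp
qed

lemma shift_ex:
  "\<exists>a\<in>(Sn :: ('n::finite,'k::field_char_0) op_n set). \<forall>q\<in>Pn. a q = (\<lambda>\<alpha>. q (\<lambda>j. \<alpha> j + \<beta> j))"
proof (induction \<beta> rule: measure_induct_rule[where f="\<lambda>\<beta>. sum \<beta> UNIV"])
  case (less \<beta>)
  show ?case
  proof (cases "\<forall>j. \<beta> j = 0")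
    case True
    then show ?thesis by (intro bexI[of _ oone]) (auto simp: oone_apply Sn.one)
  next
    case False
    then obtain i where i: "0 < \<beta> i" by auto
    define \<beta>' where "\<beta>' = \<beta>(i := \<beta> i - 1)"
    have "sum \<beta>' UNIV < sum \<beta> UNIV" unfolding \<beta>'_def using sum_dec i by blast
    then obtain a' where a': "a' \<in> (Sn :: ('n,'k) op_n set)" "\<forall>q\<in>Pn. a' q = (\<lambda>\<alpha>. q (\<lambda>j. \<alpha> j + \<beta>' j))"
      using less.IH by blast
    have "ocomp (Yop i) a' \<in> Sn" using a'(1) by (simp add: Sn.intros)
    moreover have "\<forall>q\<in>Pn. ocomp (Yop i) a' q = (\<lambda>\<alpha>. q (\<lambda>j. \<alpha> j + \<beta> j))"
    proof
      fix q :: "('n,'k) poly_n" assume q: "q \<in> Pn"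
      have e: "\<And>\<alpha>. (\<lambda>j. (\<alpha>(i := \<alpha> i + 1)) j + \<beta>' j) = (\<lambda>j. \<alpha> j + \<beta> j)"
        using i by (auto simp: \<beta>'_def fun_eq_iff)
      have aq: "a' q \<in> Pn" by (rule Sn_Pn[OF a'(1) q])
      have "ocomp (Yop i) a' q = Yop i (a' q)" using q by (simp add: ocomp_apply)
      also have "\<dots> = (\<lambda>\<alpha>. a' q (\<alpha>(i := \<alpha> i + 1)))" by (rule Yop_apply[OF aq])
      finally show "ocomp (Yop i) a' q = (\<lambda>\<alpha>. q (\<lambda>j. \<alpha> j + \<beta> j))"
        using a'(2) q e by simp
    qed
    ultimately show ?thesis by blast
  qed
qed

lemma E_ex: "finite S \<Longrightarrow>
  \<exists>a\<in>(Sn :: ('n::finite,'k::field_char_0) op_n set). \<forall>q\<in>Pn. a q = (\<lambda>\<alpha>. if \<forall>j\<in>S. \<alpha> j = 0 then q \<alpha> else 0)"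
proof (induction S rule: finite_induct)
  case empty
  then show ?case by (intro bexI[of _ oone]) (auto simp: oone_apply Sn.one)
next
  case (insert i S)
  then obtain a where a: "a \<in> (Sn :: ('n,'k) op_n set)" "\<forall>q\<in>Pn. a q = (\<lambda>\<alpha>. if \<forall>j\<in>S. \<alpha> j = 0 then q \<alpha> else 0)"
    by blast
  define e :: "('n,'k) op_n" where "e = oadd oone (osmult (-1) (ocomp (Xop i) (Yop i)))"
  have eS: "e \<in> Sn" unfolding e_def by (simp add: Sn.intros)
  have ee: "e r = (\<lambda>\<alpha>. if \<alpha> i = 0 then r \<alpha> else 0)" if r: "r \<in> Pn" for r
  proof -
    have "e r = padd r (psmult (-1) (Xop i (Yop i r)))"
      using r by (simp add: e_def oadd_apply osmult_apply ocomp_apply oone_apply)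
    also have "\<dots> = (\<lambda>\<alpha>. if \<alpha> i = 0 then r \<alpha> else 0)"
    proof -
      have "\<And>\<alpha>::'n\<Rightarrow>nat. 0 < \<alpha> i \<Longrightarrow> (\<alpha>(i := \<alpha> i - 1))(i := \<alpha> i - 1 + 1) = \<alpha>" by (auto simp: fun_eq_iff)
      moreover have "Xop i (Yop i r) = (\<lambda>a. if 0 < a i then Yop i r (a(i := a i - 1)) else 0)"
        by (rule Xop_apply[OF Yop_Pn[OF r]])
      ultimately show ?thesis using r
        by (simp add: Yop_apply padd_def psmult_def fun_eq_iff)
    qed
    finally show ?thesis .
  qed
  have "ocomp e a \<in> Sn" using eS a(1) by (simp add: Sn.intros)
  moreover have "\<forall>q\<in>Pn. ocomp e a q = (\<lambda>\<alpha>. if \<forall>j\<in>insert i S. \<alpha> j = 0 then q \<alpha> else 0)"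
    using a by (auto simp: ocomp_apply ee Sn_Pn fun_eq_iff)
  ultimately show ?case by blast
qed

lemma E_ex2: "\<exists>E\<in>(Sn :: ('n::finite,'k::field_char_0) op_n set). \<forall>q\<in>Pn. E q = psmult (q (\<lambda>_. 0)) (delta (\<lambda>_. 0))"
proof -
  obtain a where a: "a \<in> (Sn :: ('n,'k) op_n set)" "\<forall>q\<in>Pn. a q = (\<lambda>\<alpha>. if \<forall>j\<in>UNIV. \<alpha> j = 0 then q \<alpha> else 0)"
    using E_ex[of UNIV] by auto
  have z: "\<And>\<alpha>::'n\<Rightarrow>nat. (\<forall>j. \<alpha> j = 0) = (\<alpha> = (\<lambda>_. 0))" by (auto simp: fun_eq_iff)
  have "\<forall>q\<in>Pn. a q = psmult (q (\<lambda>_. 0)) (delta (\<lambda>_. 0))"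
  proof
    fix q :: "('n,'k) poly_n" assume "q \<in> Pn"
    then have "a q = (\<lambda>\<alpha>. if \<alpha> = (\<lambda>_. 0) then q \<alpha> else 0)" using a(2) z by simp
    then show "a q = psmult (q (\<lambda>_. 0)) (delta (\<lambda>_. 0))"
      by (intro ext) (simp add: psmult_def delta_def)
  qed
  then show ?thesis using a(1) by blast
qed

lemma delta_X:
  assumes "0 < g i"
  shows "Xop i (delta (g(i := g i - 1))) = (delta g :: ('n::finite,'k::field_char_0) poly_n)"
proof -
  have h: "\<And>\<alpha>. (0 < \<alpha> i \<and> \<alpha>(i := \<alpha> i - 1) = g(i := g i - 1)) = (\<alpha> = g)"
  proof -
    fix \<alpha> :: "'n \<Rightarrow> nat"
    show "(0 < \<alpha> i \<and> \<alpha>(i := \<alpha> i - 1) = g(i := g i - 1)) = (\<alpha> = g)"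
    proof
      assume h: "0 < \<alpha> i \<and> \<alpha>(i := \<alpha> i - 1) = g(i := g i - 1)"
      then have "\<alpha> i - 1 = g i - 1" by (metis fun_upd_same)
      then have "\<alpha> i = g i" using h assms by linarith
      moreover have "\<And>j. j \<noteq> i \<Longrightarrow> \<alpha> j = g j" using h by (metis fun_upd_other)
      ultimately show "\<alpha> = g" by (metis ext)
    qed (use assms in auto)
  qed
  show ?thesis
  proof (rule ext)
    fix \<alpha>
    show "Xop i (delta (g(i := g i - 1))) \<alpha> = (delta g :: ('n,'k) poly_n) \<alpha>"
      apply (subst Xop_apply[OF delta_Pn])
      unfolding delta_def using h[of \<alpha>]
      by (smt (verit))
  qed
qed

lemma delta_all:
  assumes u: "u \<in> Pn" and b: "u \<beta> \<noteq> 0"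
  shows "\<exists>a\<in>(Sn :: ('n::finite,'k::field_char_0) op_n set). a u = delta \<gamma>"
proof -
  obtain a1 where a1: "a1 \<in> (Sn :: ('n,'k) op_n set)" "\<forall>q\<in>Pn. a1 q = (\<lambda>\<alpha>. q (\<lambda>j. \<alpha> j + \<beta> j))"
    using shift_ex by blast
  obtain E where E: "E \<in> (Sn :: ('n,'k) op_n set)" "\<forall>q\<in>Pn. E q = psmult (q (\<lambda>_. 0)) (delta (\<lambda>_. 0))"
    using E_ex2 by blast
  define a0 where "a0 = osmult (1 / u \<beta>) (ocomp E a1)"
  have a0S: "a0 \<in> Sn" unfolding a0_def using a1 E by (simp add: Sn.intros)
  have a1u: "a1 u \<in> Pn" "a1 u (\<lambda>_. 0) = u \<beta>" using Sn_Pn[OF a1(1) u] a1(2) u by auto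
  have "a0 u = psmult (1 / u \<beta>) (E (a1 u))"
    unfolding a0_def using u by (simp add: osmult_apply ocomp_apply)
  also have "\<dots> = psmult (1 / u \<beta>) (psmult (u \<beta>) (delta (\<lambda>_. 0)))"
    using E(2) a1u by simp
  also have "\<dots> = delta (\<lambda>_. 0)" using b by (simp add: psmult_def fun_eq_iff)
  finally have a0u: "a0 u = delta (\<lambda>_. 0)" .
  show ?thesis
  proof (induction \<gamma> rule: measure_induct_rule[where f="\<lambda>\<beta>. sum \<beta> UNIV"])
    case (less \<gamma>)
    show ?case
    proof (cases "\<forall>j. \<gamma> j = 0")
      case True
      then have "\<gamma> = (\<lambda>_. 0)" by auto
      then show ?thesis using a0S a0u by blast
    next
      case False
      then obtain i where i: "0 < \<gamma> i" by auto
      have "sum (\<gamma>(i := \<gamma> i - 1)) UNIV < sum \<gamma> UNIV" using sum_dec i by blast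
      then obtain a' where a': "a' \<in> (Sn :: ('n,'k) op_n set)" "a' u = delta (\<gamma>(i := \<gamma> i - 1))"
        using less.IH by blast
      have "ocomp (Xop i) a' \<in> Sn" using a' by (simp add: Sn.intros)
      moreover have "ocomp (Xop i) a' u = delta \<gamma>" using u a' delta_X[of \<gamma> i, OF i] by (simp only: ocomp_apply)
      ultimately show ?thesis by blast
    qed
  qed
qed

lemma K3_aux:
  assumes u: "u \<in> Pn" and b: "u \<beta> \<noteq> 0" and S: "finite S"
  shows "\<forall>w. {a. w a \<noteq> 0} \<subseteq> S \<longrightarrow> (\<exists>a\<in>(Sn :: ('n::finite,'k::field_char_0) op_n set). a u = w)"
  using S
proof (induction S rule: finite_induct)
  case empty
  show ?case
  proof (intro allI impI)
    fix w :: "('n,'k) poly_n" assume "{a. w a \<noteq> 0} \<subseteq> {}"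
    then have w: "w = (\<lambda>_. 0)" by auto
    have "osmult 0 oone \<in> (Sn :: ('n,'k) op_n set)" by (simp add: Sn.intros)
    moreover have "osmult 0 oone u = w" using u w by (simp add: osmult_apply psmult_def)
    ultimately show "\<exists>a\<in>Sn. a u = w" by blast
  qed
next
  case (insert \<gamma> S)
  show ?case
  proof (intro allI impI)
    fix w :: "('n,'k) poly_n" assume w: "{a. w a \<noteq> 0} \<subseteq> insert \<gamma> S"
    have "{a. (w(\<gamma> := 0)) a \<noteq> 0} \<subseteq> S" using w by auto
    then obtain a' where a': "a' \<in> (Sn :: ('n,'k) op_n set)" "a' u = w(\<gamma> := 0)" using insert.IH by blast
    obtain a'' where a'': "a'' \<in> (Sn :: ('n,'k) op_n set)" "a'' u = delta \<gamma>" using delta_all[OF u b] by blast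
    have "oadd a' (osmult (w \<gamma>) a'') \<in> Sn" using a' a'' by (simp add: Sn.intros)
    moreover have "oadd a' (osmult (w \<gamma>) a'') u = w"
      using u a' a'' by (intro ext) (auto simp: oadd_apply osmult_apply padd_def psmult_def delta_def)
    ultimately show "\<exists>a\<in>Sn. a u = w" by blast
  qed
qed

lemma K3:
  assumes u: "u \<in> Pn" and nz: "u \<noteq> (\<lambda>_. 0)" and w: "w \<in> Pn"
  shows "\<exists>a\<in>(Sn :: ('n::finite,'k::field_char_0) op_n set). a u = w"
proof -
  obtain \<beta> where b: "u \<beta> \<noteq> 0" using nz by auto
  have "finite {a. w a \<noteq> 0}" using w by (simp add: Pn_def)
  then show ?thesis using K3_aux[OF u b] by blast
qed



lemma Aut_props:
  assumes "\<phi> \<in> AutK"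
  shows "\<And>p. p \<in> Pn \<Longrightarrow> \<phi> p \<in> Pn"
    and "\<And>p. p \<in> Pn \<Longrightarrow> oinv \<phi> p \<in> Pn"
    and "\<And>p. p \<in> Pn \<Longrightarrow> \<phi> (oinv \<phi> p) = p"
    and "\<And>p. p \<in> Pn \<Longrightarrow> oinv \<phi> (\<phi> p) = p"
    and "\<And>p q. p \<in> Pn \<Longrightarrow> q \<in> Pn \<Longrightarrow> \<phi> (padd p q) = padd (\<phi> p) (\<phi> q)"
    and "\<And>p c. p \<in> Pn \<Longrightarrow> \<phi> (psmult c p) = psmult c (\<phi> p)"
    and "inj_on \<phi> Pn"
proof -
  have A: "\<phi> \<in> Pn \<rightarrow>\<^sub>E Pn" "lin_on_Pn \<phi>" "bij_betw \<phi> Pn Pn" using assms by (auto simp: AutK_def)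
  show "\<And>p. p \<in> Pn \<Longrightarrow> \<phi> p \<in> Pn" using A(1) by auto
  show "\<And>p. p \<in> Pn \<Longrightarrow> oinv \<phi> p \<in> Pn" using A(3) unfolding oinv_def bij_betw_def
    by (auto intro: inv_into_into)
  show "\<And>p. p \<in> Pn \<Longrightarrow> \<phi> (oinv \<phi> p) = p" using A(3) unfolding oinv_def
    by (simp add: bij_betw_inv_into_right)
  show "\<And>p. p \<in> Pn \<Longrightarrow> oinv \<phi> (\<phi> p) = p" using A(1,3) unfolding oinv_def
    by (auto simp: bij_betw_inv_into_left)
  show "\<And>p q. p \<in> Pn \<Longrightarrow> q \<in> Pn \<Longrightarrow> \<phi> (padd p q) = padd (\<phi> p) (\<phi> q)"
    using A(2) unfolding lin_on_Pn_def by blast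
  show "\<And>p c. p \<in> Pn \<Longrightarrow> \<phi> (psmult c p) = psmult c (\<phi> p)"
    using A(2) unfolding lin_on_Pn_def by blast
  show "inj_on \<phi> Pn" using A(3) by (simp add: bij_betw_def)
qed

lemma conj_apply: fixes \<phi> a :: "('n::finite,'k::field_char_0) op_n" shows "p \<in> Pn \<Longrightarrow> conj_op \<phi> a p = \<phi> (a (oinv \<phi> p))"
  by (simp add: conj_op_def ocomp_apply)

lemma conj_ext: fixes \<phi> a :: "('n::finite,'k::field_char_0) op_n" shows "conj_op \<phi> a \<in> extensional Pn"
  by (simp add: conj_op_def ext_ops)

lemma rev_dir:
  fixes \<phi> :: "('n::finite,'k::field_char_0) op_n"
  assumes phi: "\<phi> \<in> AutK" and img: "conj_op \<phi> ` Sn = Sn"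
  shows "sigma_op \<phi> \<in> Gn"
proof -
  note P = Aut_props[OF phi]
  let ?c = "conj_op \<phi>"
  have sig: "\<And>a. a \<in> Sn \<Longrightarrow> sigma_op \<phi> a = ?c a" by (simp add: sigma_op_def)
  have inS: "\<And>a. a \<in> Sn \<Longrightarrow> ?c a \<in> Sn" using img by blast
  have cphi: "\<And>(a::('n,'k) op_n) p. p \<in> Pn \<Longrightarrow> ?c a (\<phi> p) = \<phi> (a p)"
    using P by (simp add: conj_apply)
  have inj: "inj_on ?c Sn"
  proof (rule inj_onI)
    fix a b assume ab: "a \<in> Sn" "b \<in> Sn" "?c a = ?c b"
    show "a = b"
    proof (rule extensionalityI[OF Sn_ext[OF ab(1)] Sn_ext[OF ab(2)]])
      fix p :: "('n,'k) poly_n" assume p: "p \<in> Pn"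
      have "\<phi> (a p) = \<phi> (b p)" using cphi[OF p] ab(3) by metis
      then show "a p = b p" using P(7) Sn_Pn ab p by (meson inj_onD)
    qed
  qed
  have bij: "bij_betw ?c Sn Sn" using inj img by (simp add: bij_betw_def)
  have bij2: "bij_betw (sigma_op \<phi>) Sn Sn" using bij bij_betw_cong[of Sn "sigma_op \<phi>" ?c Sn] sig by simp
  have pie: "sigma_op \<phi> \<in> Sn \<rightarrow>\<^sub>E Sn" unfolding sigma_op_def using inS by (simp add: restrict_PiE_iff)
  have hadd: "?c (oadd a b) = oadd (?c a) (?c b)" if ab: "a \<in> Sn" "b \<in> Sn" for a b
  proof (rule extensionalityI[OF conj_ext ext_ops(2)])
    fix p :: "('n,'k) poly_n" assume p: "p \<in> Pn"
    show "?c (oadd a b) p = oadd (?c a) (?c b) p"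
      using p ab P by (simp add: conj_apply oadd_apply Sn_Pn)
  qed
  have hcomp: "?c (ocomp a b) = ocomp (?c a) (?c b)" if ab: "a \<in> Sn" "b \<in> Sn" for a b
  proof (rule extensionalityI[OF conj_ext ext_ops(4)])
    fix p :: "('n,'k) poly_n" assume p: "p \<in> Pn"
    show "?c (ocomp a b) p = ocomp (?c a) (?c b) p"
      using p ab P by (simp add: conj_apply ocomp_apply Sn_Pn)
  qed
  have hsm: "?c (osmult k a) = osmult k (?c a)" if ab: "a \<in> Sn" for a k
  proof (rule extensionalityI[OF conj_ext ext_ops(3)])
    fix p :: "('n,'k) poly_n" assume p: "p \<in> Pn"
    show "?c (osmult k a) p = osmult k (?c a) p"
      using p ab P by (simp add: conj_apply osmult_apply Sn_Pn)
  qed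
  have hone: "?c oone = oone"
  proof (rule extensionalityI[OF conj_ext ext_ops(1)])
    fix p :: "('n,'k) poly_n" assume p: "p \<in> Pn"
    show "?c oone p = oone p"
      using p P by (simp add: conj_apply oone_apply)
  qed
  show ?thesis unfolding Gn_def
    using pie bij2 by (simp add: sig hadd hcomp hsm hone Sn.intros)
qed



lemma fwd_dir:
  fixes \<sigma> :: "('n::finite,'k::field_char_0) op_n \<Rightarrow> ('n,'k) op_n"
  assumes G: "\<sigma> \<in> Gn"
  shows "\<exists>\<phi>. \<sigma> = sigma_op \<phi> \<and> \<phi> \<in> AutK \<and> conj_op \<phi> ` Sn = Sn"
proof -
  have pie: "\<sigma> \<in> Sn \<rightarrow>\<^sub>E Sn" and bij: "bij_betw \<sigma> Sn Sn"
    and hadd: "\<And>a b. a \<in> Sn \<Longrightarrow> b \<in> Sn \<Longrightarrow> \<sigma> (oadd a b) = oadd (\<sigma> a) (\<sigma> b)"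
    and hcomp: "\<And>a b. a \<in> Sn \<Longrightarrow> b \<in> Sn \<Longrightarrow> \<sigma> (ocomp a b) = ocomp (\<sigma> a) (\<sigma> b)"
    and hsm: "\<And>c a. a \<in> Sn \<Longrightarrow> \<sigma> (osmult c a) = osmult c (\<sigma> a)"
    and hone: "\<sigma> oone = oone"
    using G unfolding Gn_def by auto
  have sS: "\<And>a. a \<in> Sn \<Longrightarrow> \<sigma> a \<in> Sn" using pie by auto
  have sP: "\<And>a p. a \<in> Sn \<Longrightarrow> p \<in> Pn \<Longrightarrow> \<sigma> a p \<in> Pn" using sS Sn_Pn by blast
  define d0 :: "('n,'k) poly_n" where "d0 = delta (\<lambda>_. 0)"
  have d0P: "d0 \<in> Pn" unfolding d0_def by (rule delta_Pn)
  have d0nz: "d0 \<noteq> (\<lambda>_. 0)" unfolding d0_def delta_def by (metis one_neq_zero)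
  obtain E where E: "E \<in> (Sn :: ('n,'k) op_n set)" "\<forall>q\<in>Pn. E q = psmult (q (\<lambda>_. 0)) d0"
    using E_ex2 unfolding d0_def by blast
  define Z :: "('n,'k) op_n" where "Z = osmult 0 oone"
  have ZS: "Z \<in> Sn" unfolding Z_def by (simp add: Sn.intros)
  have Zap: "\<And>p. p \<in> Pn \<Longrightarrow> Z p = (\<lambda>_. 0)" unfolding Z_def by (simp add: osmult_apply oone_apply psmult_def)
  have sZ: "\<sigma> Z = Z" unfolding Z_def using hsm[of oone 0] hone Sn.one by simp
  have "E d0 = d0" using E d0P by (simp add: psmult_def d0_def delta_def)
  then have "E \<noteq> Z" using Zap[OF d0P] d0nz by auto
  then have "\<sigma> E \<noteq> \<sigma> Z" using bij E(1) ZS unfolding bij_betw_def by (meson inj_onD)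
  then have fZ: "\<sigma> E \<noteq> Z" using sZ by simp
  obtain v where v: "v \<in> Pn" "\<sigma> E v \<noteq> Z v"
    using fZ extensionalityI[OF Sn_ext[OF sS[OF E(1)]] Sn_ext[OF ZS]] by blast
  define w0 where "w0 = \<sigma> E v"
  have w0P: "w0 \<in> Pn" unfolding w0_def using sP E(1) v(1) by blast
  have w0nz: "w0 \<noteq> (\<lambda>_. 0)" unfolding w0_def using v Zap by simp
  have EE: "ocomp E E = E"
  proof (rule extensionalityI[OF ext_ops(4) Sn_ext[OF E(1)]])
    fix p :: "('n,'k) poly_n" assume p: "p \<in> Pn"
    have "psmult (p (\<lambda>_. 0)) d0 \<in> Pn" by (rule psmult_Pn[OF d0P])
    then show "ocomp E E p = E p" using p E(2)
      by (simp add: ocomp_apply psmult_def d0_def delta_def)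
  qed
  have fw0: "\<sigma> E w0 = w0"
  proof -
    have "\<sigma> E w0 = ocomp (\<sigma> E) (\<sigma> E) v" unfolding w0_def using v(1) by (simp add: ocomp_apply)
    also have "\<dots> = \<sigma> (ocomp E E) v" using hcomp E(1) by simp
    finally show ?thesis using EE w0_def by simp
  qed
  have wd: "\<sigma> a w0 = \<sigma> b w0" if ab: "a \<in> Sn" "b \<in> Sn" "a d0 = b d0" for a b
  proof -
    have aE: "ocomp a E = ocomp b E"
    proof (rule extensionalityI[OF ext_ops(4) ext_ops(4)])
      fix p :: "('n,'k) poly_n" assume p: "p \<in> Pn"
      show "ocomp a E p = ocomp b E p" using p E(2) ab d0P by (simp add: ocomp_apply Sn_smult)
    qed
    have "\<And>a. a \<in> Sn \<Longrightarrow> \<sigma> a w0 = \<sigma> (ocomp a E) w0"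
    proof -
      fix a :: "('n,'k) op_n" assume a: "a \<in> Sn"
      have "\<sigma> a w0 = ocomp (\<sigma> a) (\<sigma> E) w0" using fw0 w0P by (simp add: ocomp_apply)
      also have "\<dots> = \<sigma> (ocomp a E) w0" using hcomp a E(1) by simp
      finally show "\<sigma> a w0 = \<sigma> (ocomp a E) w0" .
    qed
    then show ?thesis using ab aE by metis
  qed
  have ex: "\<exists>a\<in>Sn. a d0 = p" if "p \<in> Pn" for p using K3[OF d0P d0nz that] .
  define \<psi> where "\<psi> p = \<sigma> (SOME a. a \<in> Sn \<and> a d0 = p) w0" for p
  define \<phi> where "\<phi> = restrict \<psi> Pn"
  have key1: "\<phi> (a d0) = \<sigma> a w0" if a: "a \<in> Sn" for a
  proof -
    have ad: "a d0 \<in> Pn" using Sn_Pn a d0P by blast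
    have "\<exists>b. b \<in> Sn \<and> b d0 = a d0" using a by blast
    then have "(SOME b. b \<in> Sn \<and> b d0 = a d0) \<in> Sn \<and> (SOME b. b \<in> Sn \<and> b d0 = a d0) d0 = a d0"
      by (rule someI_ex)
    then obtain b where b: "b \<in> Sn" "b d0 = a d0" "b = (SOME b. b \<in> Sn \<and> b d0 = a d0)" by blast
    have "\<phi> (a d0) = \<psi> (a d0)" unfolding \<phi>_def using ad by (rule restrict_apply')
    also have "\<dots> = \<sigma> b w0" unfolding \<psi>_def using b(3) by simp
    also have "\<dots> = \<sigma> a w0" using wd[OF b(1) a b(2)] .
    finally show ?thesis .
  qed
  have key2: "\<phi> (a p) = \<sigma> a (\<phi> p)" if a: "a \<in> Sn" and p: "p \<in> Pn" for a p
  proof -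
    obtain b where b: "b \<in> Sn" "b d0 = p" using ex[OF p] by blast
    have "a p = ocomp a b d0" using b d0P by (simp add: ocomp_apply)
    then have "\<phi> (a p) = \<sigma> (ocomp a b) w0" using key1 a b Sn.comp by metis
    also have "\<dots> = \<sigma> a (\<sigma> b w0)" using hcomp a b w0P by (simp add: ocomp_apply)
    also have "\<dots> = \<sigma> a (\<phi> p)" using key1 b by metis
    finally show ?thesis .
  qed
  have phiP: "\<phi> p \<in> Pn" if p: "p \<in> Pn" for p
  proof -
    obtain b where b: "b \<in> Sn" "b d0 = p" using ex[OF p] by blast
    then show ?thesis using key1 sP w0P by metis
  qed
  have phid0: "\<phi> d0 = w0" using key1[OF Sn.one] d0P hone w0P by (simp add: oone_apply)
  have padd_phi: "\<phi> (padd p q) = padd (\<phi> p) (\<phi> q)" if p: "p \<in> Pn" and q: "q \<in> Pn" for p q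
  proof -
    obtain b1 where b1: "b1 \<in> Sn" "b1 d0 = p" using ex[OF p] by blast
    obtain b2 where b2: "b2 \<in> Sn" "b2 d0 = q" using ex[OF q] by blast
    have "padd p q = oadd b1 b2 d0" using b1 b2 d0P by (simp add: oadd_apply)
    then have "\<phi> (padd p q) = \<sigma> (oadd b1 b2) w0" using key1 b1 b2 Sn.add by metis
    also have "\<dots> = padd (\<sigma> b1 w0) (\<sigma> b2 w0)" using hadd b1 b2 w0P by (simp add: oadd_apply)
    finally show ?thesis using key1 b1 b2 by metis
  qed
  have psm_phi: "\<phi> (psmult c p) = psmult c (\<phi> p)" if p: "p \<in> Pn" for p c
  proof -
    obtain b1 where b1: "b1 \<in> Sn" "b1 d0 = p" using ex[OF p] by blast
    have "psmult c p = osmult c b1 d0" using b1 d0P by (simp add: osmult_apply)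
    then have "\<phi> (psmult c p) = \<sigma> (osmult c b1) w0" using key1 b1 Sn.smult by metis
    also have "\<dots> = psmult c (\<sigma> b1 w0)" using hsm b1 w0P by (simp add: osmult_apply)
    finally show ?thesis using key1 b1 by metis
  qed
  have inj: "inj_on \<phi> Pn"
  proof (rule inj_onI)
    fix p q :: "('n,'k) poly_n" assume p: "p \<in> Pn" and q: "q \<in> Pn" and e: "\<phi> p = \<phi> q"
    define d where "d = padd p (psmult (-1) q)"
    have dP: "d \<in> Pn" unfolding d_def using p q by (simp add: padd_Pn psmult_Pn)
    have "\<phi> d = padd (\<phi> p) (psmult (-1) (\<phi> q))"
      unfolding d_def using padd_phi[OF p psmult_Pn[OF q]] psm_phi[OF q] by simp
    then have phd: "\<phi> d = (\<lambda>_. 0)" using e by (simp add: padd_def psmult_def)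
    have "d = (\<lambda>_. 0)"
    proof (rule ccontr)
      assume "d \<noteq> (\<lambda>_. 0)"
      then obtain a where a: "a \<in> Sn" "a d = d0" using K3[OF dP _ d0P] by blast
      have "w0 = \<sigma> a (\<phi> d)" using key2[OF a(1) dP] a(2) phid0 by simp
      also have "\<dots> = \<sigma> a (psmult 0 (\<lambda>_. 0))" using phd by (simp add: psmult_def)
      also have "\<dots> = psmult 0 (\<sigma> a (\<lambda>_. 0))" using Sn_smult[OF sS[OF a(1)] zero_Pn] by simp
      also have "\<dots> = (\<lambda>_. 0)" by (simp add: psmult_def)
      finally show False using w0nz by simp
    qed
    then have "\<And>x. p x - q x = 0" unfolding d_def padd_def psmult_def by (metis diff_conv_add_uminus mult_minus1)
    then show "p = q" by (simp add: fun_eq_iff)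
  qed
  have surj: "\<phi> ` Pn = Pn"
  proof
    show "\<phi> ` Pn \<subseteq> Pn" using phiP by blast
    show "Pn \<subseteq> \<phi> ` Pn"
    proof
      fix q :: "('n,'k) poly_n" assume q: "q \<in> Pn"
      obtain c where c: "c \<in> Sn" "c w0 = q" using K3[OF w0P w0nz q] by blast
      obtain a where a: "a \<in> Sn" "c = \<sigma> a" using c(1) bij unfolding bij_betw_def by blast
      have "\<phi> (a d0) = q" using key1[OF a(1)] a(2) c(2) by simp
      moreover have "a d0 \<in> Pn" using Sn_Pn a(1) d0P by blast
      ultimately show "q \<in> \<phi> ` Pn" by blast
    qed
  qed
  have aut: "\<phi> \<in> AutK"
    unfolding AutK_def lin_on_Pn_def bij_betw_def
    using inj surj phiP padd_phi psm_phi by (simp add: \<phi>_def restrict_PiE_iff)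
  note P = Aut_props[OF aut]
  have cs: "conj_op \<phi> a = \<sigma> a" if a: "a \<in> Sn" for a
  proof (rule extensionalityI[OF conj_ext Sn_ext[OF sS[OF a]]])
    fix p :: "('n,'k) poly_n" assume p: "p \<in> Pn"
    have "conj_op \<phi> a p = \<phi> (a (oinv \<phi> p))" by (rule conj_apply[OF p])
    also have "\<dots> = \<sigma> a (\<phi> (oinv \<phi> p))" using key2 a P(2) p by blast
    also have "\<dots> = \<sigma> a p" using P(3) p by simp
    finally show "conj_op \<phi> a p = \<sigma> a p" .
  qed
  have img: "conj_op \<phi> ` Sn = Sn" using cs bij unfolding bij_betw_def by (metis image_cong)
  have "sigma_op \<phi> = \<sigma>"
  proof (rule extensionalityI[of _ Sn])
    show "sigma_op \<phi> \<in> extensional Sn" unfolding sigma_op_def by (rule restrict_extensional)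
    show "\<sigma> \<in> extensional Sn" using pie by (simp add: PiE_iff)
    fix a :: "('n,'k) op_n" assume "a \<in> Sn" then show "sigma_op \<phi> a = \<sigma> a" using cs by (simp add: sigma_op_def)
  qed
  then show ?thesis using aut img by blast
qed


theorem theorem3p2:
  shows "(Gn :: (('n::finite, 'k::field_char_0) op_n \<Rightarrow> ('n, 'k) op_n) set)
    = {sigma_op \<phi> | \<phi>. \<phi> \<in> AutK \<and> conj_op \<phi> ` Sn = Sn}"
proof
  show "(Gn :: (('n::finite, 'k::field_char_0) op_n \<Rightarrow> ('n, 'k) op_n) set)
    \<subseteq> {sigma_op \<phi> | \<phi>. \<phi> \<in> AutK \<and> conj_op \<phi> ` Sn = Sn}"
    using fwd_dir by blast
  show "{sigma_op \<phi> | \<phi>. \<phi> \<in> AutK \<and> conj_op \<phi> ` Sn = Sn}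
    \<subseteq> (Gn :: (('n::finite, 'k::field_char_0) op_n \<Rightarrow> ('n, 'k) op_n) set)"
    using rev_dir by blast
qed

end
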